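(* Let $P(t)$ be a reciprocal polynomial, written $P(t)=(t-1)^L(t+1)^KP^*(t)$ with $L,K\ge0$ and $P^*(\pm1)\neq0$, and put $\widetilde P(t)=(t-1)^{2\lfloor L/2\rfloor}(t+1)^{2\lfloor K/2\rfloor}P^*(t)$. Then $$Z(\mathfrak I_{P(t)})=\{p(t)e+p(t^{-1})f+q(t)h\in\mathfrak{OA}:\ \widetilde P(t)\mid p(t),\ P(t)\mid q(t)\},$$ divisibility taken in $\mathbb C[t,t^{-1}]$. Consequently $\mathfrak I_{P(t)}$ is closed if and only if $L$ and $K$ are both even.
   Context: Work over $\mathbb C$. $\mathfrak{sl}_2$ has basis $e,f,h$ with $[e,f]=h$, $[h,e]=2e$, $[h,f]=-2f$. $L(\mathfrak{sl}_2)=\mathbb C[t,t^{-1}]\otimes\mathfrak{sl}_2$ is the loop algebra with bracket $[p(t)x,q(t)y]=p(t)q(t)[x,y]$. The Onsager algebra is the Lie subalgebra $\mathfrak{OA}=\{p(t)e+p(t^{-1})f+q(t)h:\ p,q\in\mathbb C[t,t^{-1}],\ q(t^{-1})=-q(t)\}$ of $L(\mathfrak{sl}_2)$. A reciprocal polynomial is a nonconstant monic $P\in\mathbb C[t]$ with $P(t)=\pm t^{\deg P}P(t^{-1})$. For a reciprocal polynomial $P$, $\mathfrak I_{P(t)}=\{p(t)e+p(t^{-1})f+q(t)h\in\mathfrak{OA}:\ p(t),q(t)\in P(t)\mathbb C[t,t^{-1}]\}$; it is an ideal of $\mathfrak{OA}$. For an ideal $I$ of a Lie algebra $\mathfrak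 L$, $Z(I)=\{x\in\mathfrak L:[x,\mathfrak L]\subset I\}$; a nonzero proper ideal $I$ is called closed if $Z(I)=I$. $\lfloor r\rfloor$ is the integer part. *)

theory Defs
  imports "HOL-Computational_Algebra.Computational_Algebra"
          "HOL-Computational_Algebra.Polynomial_FPS"
          "HOL-Computational_Algebra.Formal_Laurent_Series"
begin

definition laurent_polys :: "complex fls set" where
  "laurent_polys = {f. finite {n. fls_nth f n \<noteq> 0}}"

(* p(t) |-> p(t^-1) on Laurent polynomials *)
definition lrefl :: "complex fls \<Rightarrow> complex fls" where
  "lrefl f = (\<Sum>n\<in>{n. fls_nth f n \<noteq> 0}. fls_const (fls_nth f n) * fls_X_intpow (- n))"

definition ldvd :: "complex fls \<Rightarrow> complex fls \<Rightarrow> bool" where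
  "ldvd a b \<longleftrightarrow> (\<exists>r\<in>laurent_polys. b = a * r)"

definition lpoly :: "complex poly \<Rightarrow> complex fls" where
  "lpoly p = fps_to_fls (fps_of_poly p)"

(* Loop algebra L(sl2): the triple (a,b,c) stands for a e + b f + c h,
   with a,b,c Laurent polynomials; bracket from [e,f]=h, [h,e]=2e, [h,f]=-2f. *)
type_synonym loopel = "complex fls \<times> complex fls \<times> complex fls"

definition loop_alg :: "loopel set" where
  "loop_alg = {(a,b,c). a \<in> laurent_polys \<and> b \<in> laurent_polys \<and> c \<in> laurent_polys}"

fun lbr :: "loopel \<Rightarrow> loopel \<Rightarrow> loopel" where
  "lbr (a,b,c) (a',b',c') =
     (2 * (c * a' - a * c'), 2 * (b * c' - c * b'), a * b' - b * a')"

definition OA :: "loopel set" where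
  "OA = {(p, lrefl p, q) | p q. p \<in> laurent_polys \<and> q \<in> laurent_polys \<and> lrefl q = - q}"

definition IP :: "complex poly \<Rightarrow> loopel set" where
  "IP P = {(p, lrefl p, q) | p q. (p, lrefl p, q) \<in> OA \<and> ldvd (lpoly P) p \<and> ldvd (lpoly P) q}"

definition ZI :: "loopel set \<Rightarrow> loopel set" where
  "ZI I = {x \<in> OA. \<forall>y\<in>OA. lbr x y \<in> I}"

definition closed_ideal :: "loopel set \<Rightarrow> bool" where
  "closed_ideal I \<longleftrightarrow> I \<noteq> {(0, 0, 0)} \<and> I \<noteq> OA \<and> ZI I = I"

definition reciprocal :: "complex poly \<Rightarrow> bool" where
  "reciprocal P \<longleftrightarrow> degree P > 0 \<and> lead_coeff P = 1 \<and>
     (reflect_poly P = P \<or> reflect_poly P = - P)"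

end

theory Submission
  imports Defs "HOL-Computational_Algebra.Field_as_Ring"
begin

lemma lpoly_nth: "fls_nth (lpoly g) n = (if n < 0 then 0 else coeff g (nat n))"
  by (simp add: lpoly_def)

lemma lpoly_mult: "lpoly (g * h) = lpoly g * lpoly h"
  by (simp add: lpoly_def fps_of_poly_mult fls_times_fps_to_fls)
lemma lpoly_add: "lpoly (g + h) = lpoly g + lpoly h"
  by (simp add: lpoly_def fps_of_poly_add)
lemma lpoly_diff: "lpoly (g - h) = lpoly g - lpoly h"
  by (simp add: lpoly_def fps_of_poly_diff)
lemma lpoly_uminus: "lpoly (- h) = - lpoly h"
  by (simp add: lpoly_def fps_of_poly_uminus)
lemma lpoly_0[simp]: "lpoly 0 = 0"
  by (simp add: lpoly_def)
lemma lpoly_1[simp]: "lpoly 1 = 1"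
  by (simp add: lpoly_def)
lemma lpoly_eq_iff[simp]: "lpoly g = lpoly h \<longleftrightarrow> g = h"
  by (simp add: lpoly_def fps_of_poly_eq_iff)
lemma lpoly_const: "lpoly [:c:] = fls_const c"
  by (rule fls_eqI) (simp add: lpoly_nth coeff_pCons split: nat.splits)

lemma lpoly_monom_mult: "lpoly (monom 1 n * g) = fls_shift (- int n) (lpoly g)"
  by (rule fls_eqI) (auto simp: lpoly_nth coeff_monom_mult nat_diff_distrib)

lemma LP_iff: "f \<in> laurent_polys \<longleftrightarrow> (\<exists>k g. f = fls_shift k (lpoly g))"
proof
  assume "f \<in> laurent_polys"
  then have fin: "finite {n. fls_nth f n \<noteq> 0}" by (simp add: laurent_polys_def)
  obtain B :: nat where B: "\<And>n. fls_nth f n \<noteq> 0 \<Longrightarrow> - int B \<le> n \<and> n \<le> int B"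
  proof -
    define B where "B = nat (Max (insert 0 (abs ` {n. fls_nth f n \<noteq> 0})))"
    have "\<And>n. fls_nth f n \<noteq> 0 \<Longrightarrow> \<bar>n\<bar> \<le> Max (insert 0 (abs ` {n. fls_nth f n \<noteq> 0}))"
      using fin by (intro Max_ge) auto
    then show ?thesis using that[of B] unfolding B_def by fastforce
  qed
  define g where "g = Poly (map (\<lambda>i. fls_nth f (int i - int B)) [0..<2*B+1])"
  have "f = fls_shift (int B) (lpoly g)"
  proof (rule fls_eqI)
    fix n
    show "fls_nth f n = fls_nth (fls_shift (int B) (lpoly g)) n"
    proof (cases "fls_nth f n = 0")
      case True
      then show ?thesis
        by (auto simp: lpoly_nth g_def nth_default_def simp del: upt_Suc)
    next
      case False
      with B[OF this] show ?thesis
        by (auto simp: lpoly_nth g_def nth_default_def simp del: upt_Suc)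
    qed
  qed
  then show "\<exists>k g. f = fls_shift k (lpoly g)" by blast
next
  assume "\<exists>k g. f = fls_shift k (lpoly g)"
  then obtain k g where f: "f = fls_shift k (lpoly g)" by blast
  have "{n. fls_nth f n \<noteq> 0} \<subseteq> {-k..int (degree g) - k}"
    by (auto simp: f lpoly_nth coeff_eq_0 intro: ccontr le_degree)
  then show "f \<in> laurent_polys" unfolding laurent_polys_def
    using finite_subset by blast
qed

lemma LP_shift_lpoly[simp]: "fls_shift k (lpoly g) \<in> laurent_polys"
  using LP_iff by blast

lemma LP_finite: "f \<in> laurent_polys \<Longrightarrow> finite {n. fls_nth f n \<noteq> 0}"
  by (simp add: laurent_polys_def)

lemma lrefl_nth:
  assumes "f \<in> laurent_polys"
  shows "fls_nth (lrefl f) n = fls_nth f (-n)"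
proof -
  let ?S = "{n. fls_nth f n \<noteq> 0}"
  have "fls_nth (lrefl f) n = (\<Sum>m\<in>?S. fls_nth f m * (if n + m = 0 then 1 else 0))"
    unfolding lrefl_def fls_nth_sum by simp
  also have "\<dots> = (\<Sum>m\<in>?S. if m = -n then fls_nth f m else 0)"
    by (rule sum.cong) auto
  also have "\<dots> = fls_nth f (-n)"
    using LP_finite[OF assms] by (simp add: sum.delta')
  finally show ?thesis .
qed

lemma LP_add: "f \<in> laurent_polys \<Longrightarrow> g \<in> laurent_polys \<Longrightarrow> f + g \<in> laurent_polys"
  unfolding laurent_polys_def mem_Collect_eq
  by (rule finite_subset[of _ "{n. fls_nth f n \<noteq> 0} \<union> {n. fls_nth g n \<noteq> 0}"]) auto
lemma LP_diff: "f \<in> laurent_polys \<Longrightarrow> g \<in> laurent_polys \<Longrightarrow> f - g \<in> laurent_polys"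
  unfolding laurent_polys_def mem_Collect_eq
  by (rule finite_subset[of _ "{n. fls_nth f n \<noteq> 0} \<union> {n. fls_nth g n \<noteq> 0}"]) auto
lemma LP_uminus: "f \<in> laurent_polys \<Longrightarrow> - f \<in> laurent_polys"
  unfolding laurent_polys_def by simp
lemma LP_mult: "f \<in> laurent_polys \<Longrightarrow> g \<in> laurent_polys \<Longrightarrow> f * g \<in> laurent_polys"
  unfolding LP_iff by (auto simp: fls_times_both_shifted_simp lpoly_mult[symmetric] simp del: fls_shift_fls_shift) blast
lemma LP_shift: "f \<in> laurent_polys \<Longrightarrow> fls_shift k f \<in> laurent_polys"
  unfolding LP_iff by (auto simp del: fls_shift_fls_shift) (metis fls_shift_fls_shift)
lemma LP_lpoly[simp]: "lpoly g \<in> laurent_polys"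
  using LP_shift_lpoly[of 0 g] by simp
lemma LP_0[simp]: "0 \<in> laurent_polys"
  using LP_lpoly[of 0] by simp
lemma LP_1[simp]: "1 \<in> laurent_polys"
  using LP_lpoly[of 1] by simp
lemma LP_const[simp]: "fls_const c \<in> laurent_polys"
  using LP_lpoly[of "[:c:]"] by (simp add: lpoly_const)
lemma LP_numeral[simp]: "numeral k \<in> laurent_polys"
  using LP_const[of "numeral k"] by simp

lemma LP_lrefl: assumes "f \<in> laurent_polys" shows "lrefl f \<in> laurent_polys"
proof -
  have "{n. fls_nth (lrefl f) n \<noteq> 0} = uminus ` {n. fls_nth f n \<noteq> 0}"
    by (auto simp: lrefl_nth[OF assms] image_iff) (metis minus_minus)
  then show ?thesis using LP_finite[OF assms] unfolding laurent_polys_def by simp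
qed

lemma lrefl_add: "f \<in> laurent_polys \<Longrightarrow> g \<in> laurent_polys \<Longrightarrow> lrefl (f + g) = lrefl f + lrefl g"
  by (rule fls_eqI) (simp add: lrefl_nth LP_add)
lemma lrefl_diff: "f \<in> laurent_polys \<Longrightarrow> g \<in> laurent_polys \<Longrightarrow> lrefl (f - g) = lrefl f - lrefl g"
  by (rule fls_eqI) (simp add: lrefl_nth LP_diff)
lemma lrefl_uminus: "f \<in> laurent_polys \<Longrightarrow> lrefl (- f) = - lrefl f"
  by (rule fls_eqI) (simp add: lrefl_nth LP_uminus)
lemma lrefl_lrefl: "f \<in> laurent_polys \<Longrightarrow> lrefl (lrefl f) = f"
  by (rule fls_eqI) (simp add: lrefl_nth LP_lrefl)
lemma lrefl_const[simp]: "lrefl (fls_const c) = fls_const c"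
  by (rule fls_eqI) (simp add: lrefl_nth)
lemma lrefl_0[simp]: "lrefl 0 = 0"
  using lrefl_const[of 0] by simp
lemma lrefl_1[simp]: "lrefl 1 = 1"
  using lrefl_const[of 1] by simp
lemma lrefl_numeral[simp]: "lrefl (numeral k) = numeral k"
  using lrefl_const[of "numeral k"] by simp
lemma lrefl_shift: "f \<in> laurent_polys \<Longrightarrow> lrefl (fls_shift k f) = fls_shift (-k) (lrefl f)"
  by (rule fls_eqI) (simp add: lrefl_nth LP_shift)

lemma lrefl_lpoly: "lrefl (lpoly g) = fls_shift (int (degree g)) (lpoly (reflect_poly g))"
proof (rule fls_eqI)
  fix n
  show "fls_nth (lrefl (lpoly g)) n = fls_nth (fls_shift (int (degree g)) (lpoly (reflect_poly g))) n"
    by (auto simp: lrefl_nth lpoly_nth coeff_reflect_poly coeff_eq_0 nat_diff_distrib)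
       (rule arg_cong[where f="coeff g"]; linarith)
qed

lemma lrefl_rep: "lrefl (fls_shift k (lpoly g)) = fls_shift (int (degree g) - k) (lpoly (reflect_poly g))"
  by (simp add: lrefl_shift lrefl_lpoly)

lemma lrefl_mult:
  assumes "f \<in> laurent_polys" "h \<in> laurent_polys"
  shows "lrefl (f * h) = lrefl f * lrefl h"
proof -
  obtain a g b k where f: "f = fls_shift a (lpoly g)" and h: "h = fls_shift b (lpoly k)"
    using assms LP_iff by blast
  show ?thesis
  proof (cases "g = 0 \<or> k = 0")
    case True then show ?thesis by (auto simp: f h)
  next
    case False
    then have "degree (g * k) = degree g + degree k" by (simp add: degree_mult_eq)
    then show ?thesis
      by (simp add: f h fls_times_both_shifted_simp lpoly_mult[symmetric] lrefl_rep reflect_poly_mult algebra_simps)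
  qed
qed

lemma coprime_lin: assumes "poly (A::complex poly) c \<noteq> 0" shows "coprime [:-c,1:] A"
proof -
  have "prime_elem [:-c,1:]" by (rule prime_elem_linear_field_poly) simp
  moreover have "\<not> [:-c,1:] dvd A" using assms poly_eq_0_iff_dvd by blast
  ultimately show ?thesis by (rule prime_elem_imp_coprime)
qed

lemma coprime_lin_pow: assumes "poly (A::complex poly) c \<noteq> 0" shows "coprime ([:-c,1:]^n) A"
  using coprime_lin[OF assms] by (simp add: coprime_power_left_iff)

lemma ldvd_iff:
  assumes A0: "poly A 0 \<noteq> 0"
  shows "ldvd (lpoly A) (fls_shift k (lpoly G)) \<longleftrightarrow> A dvd G"
proof
  assume "A dvd G"
  then obtain B where "G = A * B" by blast
  then have "fls_shift k (lpoly G) = lpoly A * fls_shift k (lpoly B)"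
    by (simp add: lpoly_mult fls_shifted_times_simps)
  then show "ldvd (lpoly A) (fls_shift k (lpoly G))"
    unfolding ldvd_def by auto
next
  assume "ldvd (lpoly A) (fls_shift k (lpoly G))"
  then obtain r where r: "r \<in> laurent_polys" "fls_shift k (lpoly G) = lpoly A * r"
    unfolding ldvd_def by blast
  then obtain j R where rR: "r = fls_shift j (lpoly R)" using LP_iff by blast
  have "fls_shift k (lpoly G) = fls_shift j (lpoly (A * R))"
    using r(2) by (simp add: rR lpoly_mult fls_shifted_times_simps)
  then have "fls_shift (-k) (fls_shift k (lpoly G)) = fls_shift (-k) (fls_shift j (lpoly (A * R)))"
    by simp
  then have eq: "lpoly G = fls_shift (j - k) (lpoly (A * R))"
    by simp
  show "A dvd G"
  proof (cases "j - k \<le> 0")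
    case True
    have "lpoly G = lpoly (monom 1 (nat (k - j)) * (A * R))"
      using True by (simp add: eq lpoly_monom_mult)
    then have "G = A * (monom 1 (nat (k - j)) * R)" by (simp add: algebra_simps)
    then show ?thesis by (metis dvd_triv_left)
  next
    case False
    have "lpoly (monom 1 (nat (j - k)) * G) = lpoly (A * R)"
      using False by (simp add: eq lpoly_monom_mult)
    then have "A dvd monom 1 (nat (j - k)) * G" by (metis dvd_triv_left lpoly_eq_iff)
    moreover have "coprime A (monom 1 (nat (j - k)))"
      using coprime_lin_pow[of A 0 "nat (j - k)"] A0 by (simp add: monom_altdef coprime_commute)
    ultimately show ?thesis by (simp add: coprime_dvd_mult_right_iff)
  qed
qed

lemma reflect_m1: "reflect_poly [:-1, 1::complex:] = smult (-1) [:-1, 1:]"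
  by (simp add: reflect_poly_def)
lemma reflect_p1: "reflect_poly [:1, 1::complex:] = [:1, 1:]"
  by (simp add: reflect_poly_def)
lemma poly_reflect_1: "poly (reflect_poly p) (1::complex) = poly p 1"
  by (simp add: poly_reflect_poly_nz)
lemma poly_reflect_m1: "poly (reflect_poly p) (-1::complex) = (-1) ^ degree p * poly p (-1)"
  by (simp add: poly_reflect_poly_nz)

lemma recip_facts:
  fixes P Ps :: "complex poly"
  assumes rec: "reciprocal P" and P: "P = [:-1, 1:] ^ L * [:1, 1:] ^ K * Ps"
    and n1: "poly Ps 1 \<noteq> 0" and n2: "poly Ps (-1) \<noteq> 0"
  shows "reflect_poly Ps = Ps" "even (degree Ps)" "poly P 0 \<noteq> 0" "Ps \<noteq> 0"
proof -
  show "Ps \<noteq> 0" using n1 by auto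
  from rec have lc: "lead_coeff P = 1" and rr: "reflect_poly P = P \<or> reflect_poly P = - P"
    by (auto simp: reciprocal_def)
  obtain e :: complex where e: "reflect_poly P = smult e P" "e = 1 \<or> e = -1"
    using rr by (metis smult_1_left smult_minus_left)
  have "coeff (reflect_poly P) 0 = 1" using lc by simp
  then have "e * coeff P 0 = 1" using e(1) by simp
  then show "poly P 0 \<noteq> 0" by (auto simp: poly_0_coeff_0)
  define Q where "Q = [:-1, 1::complex:] ^ L * [:1, 1:] ^ K"
  have Q0: "Q \<noteq> 0" by (simp add: Q_def)
  have m1L: "[:1,-1::complex:]^L = smult ((-1)^L) ([:-1,1:]^L)"
    using smult_power[of "-1" "[:-1,1::complex:]" L] by simp
  have "reflect_poly P = smult ((-1) ^ L) (Q * reflect_poly Ps)"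
    by (simp add: P Q_def reflect_poly_mult reflect_poly_power reflect_m1 reflect_p1 m1L)
  then have "smult ((-1) ^ L) (Q * reflect_poly Ps) = smult e (Q * Ps)"
    using e(1) by (simp add: P Q_def)
  then have "Q * smult ((-1) ^ L) (reflect_poly Ps) = Q * smult e Ps"
    by (simp only: mult_smult_right)
  then have eq: "smult ((-1) ^ L) (reflect_poly Ps) = smult e Ps"
    by (rule mult_left_cancel[THEN iffD1, OF Q0])
  then have "poly (smult ((-1) ^ L) (reflect_poly Ps)) 1 = poly (smult e Ps) 1" by simp
  then have "(-1) ^ L = e" using n1 by (simp add: poly_reflect_1)
  with eq show rP: "reflect_poly Ps = Ps" using e(2) by auto
  have "poly (reflect_poly Ps) (-1) = poly Ps (-1)" using rP by simp
  then have "(-1::complex) ^ degree Ps = 1" using n2 by (simp add: poly_reflect_m1)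
  then show "even (degree Ps)" by (simp add: minus_one_power_iff split: if_splits)
qed

lemma shift_diff: "fls_shift a (lpoly g) - fls_shift b (lpoly h) =
  fls_shift (max a b) (lpoly (monom 1 (nat (max a b - a)) * g - monom 1 (nat (max a b - b)) * h))"
  by (simp add: lpoly_diff lpoly_monom_mult)
lemma shift_add: "fls_shift a (lpoly g) + fls_shift b (lpoly h) =
  fls_shift (max a b) (lpoly (monom 1 (nat (max a b - a)) * g + monom 1 (nat (max a b - b)) * h))"
  by (simp add: lpoly_add lpoly_monom_mult)
lemma shift_lpoly_eq0: "fls_shift a (lpoly g) = 0 \<longleftrightarrow> g = 0"
  by (metis fls_shift_eq0_iff lpoly_0 lpoly_eq_iff)

lemma m1_dvd_iff: "[:-1, 1::complex:] dvd p \<longleftrightarrow> poly p 1 = 0"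
  using poly_eq_0_iff_dvd[of p 1] by simp
lemma p1_dvd_iff: "[:1, 1::complex:] dvd p \<longleftrightarrow> poly p (-1) = 0"
  using poly_eq_0_iff_dvd[of p "-1"] by simp

lemma m1_part:
  fixes g :: "complex poly"
  assumes N: "odd N" and "[:-1,1:]^N dvd g"
    and "[:-1,1:]^(N+1) dvd monom 1 i * g - monom 1 j * reflect_poly g"
  shows "[:-1,1:]^(N+1) dvd g"
proof -
  let ?m = "[:-1,1::complex:]"
  obtain u where g: "g = ?m^N * u" using assms(2) by blast
  have "reflect_poly g = (reflect_poly ?m)^N * reflect_poly u"
    by (simp only: g reflect_poly_mult reflect_poly_power)
  also have "\<dots> = smult ((-1)^N) (?m^N) * reflect_poly u"
    by (simp only: reflect_m1 smult_power)
  finally have rg: "reflect_poly g = - (?m^N * reflect_poly u)" using N by simp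
  have "monom 1 i * g - monom 1 j * reflect_poly g = ?m^N * (monom 1 i * u + monom 1 j * reflect_poly u)"
    unfolding rg by (simp add: g algebra_simps)
  moreover have "?m^(N+1) = ?m^N * ?m" by simp
  ultimately have "?m^N * ?m dvd ?m^N * (monom 1 i * u + monom 1 j * reflect_poly u)"
    using assms(3) by metis
  then have "?m dvd monom 1 i * u + monom 1 j * reflect_poly u"
    by (subst (asm) dvd_times_left_cancel_iff) simp_all
  then have "poly u 1 + poly u 1 = 0"
    by (simp add: m1_dvd_iff poly_monom poly_reflect_1)
  then have "?m dvd u" by (simp add: m1_dvd_iff)
  then have "?m^N * ?m dvd g" unfolding g by (rule mult_dvd_mono[OF dvd_refl])
  then show ?thesis by (simp add: mult.commute)
qed

lemma p1_part:
  fixes g :: "complex poly"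
  assumes "[:1,1:]^N dvd g"
    and "[:1,1:]^(N+1) dvd monom 1 i * g - monom 1 j * reflect_poly g"
    and "odd (i + j + degree g + N)"
  shows "[:1,1:]^(N+1) dvd g"
proof -
  let ?m = "[:1,1::complex:]"
  obtain u where g: "g = ?m^N * u" using assms(1) by blast
  show ?thesis
  proof (cases "u = 0")
    case True then show ?thesis by (simp add: g)
  next
    case False
    have dg: "degree g = N + degree u" using False by (simp add: g degree_mult_eq degree_power_eq)
    have rg: "reflect_poly g = ?m^N * reflect_poly u"
      by (simp only: g reflect_poly_mult reflect_poly_power reflect_p1)
    have "monom 1 i * g - monom 1 j * reflect_poly g = ?m^N * (monom 1 i * u - monom 1 j * reflect_poly u)"
      unfolding rg by (simp add: g algebra_simps)
    moreover have "?m^(N+1) = ?m^N * ?m" by simp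
    ultimately have "?m^N * ?m dvd ?m^N * (monom 1 i * u - monom 1 j * reflect_poly u)"
      using assms(2) by metis
    then have "?m dvd monom 1 i * u - monom 1 j * reflect_poly u"
      by (subst (asm) dvd_times_left_cancel_iff) simp_all
    then have "(-1) ^ i * poly u (-1) - (-1) ^ (j + degree u) * poly u (-1) = 0"
      by (simp add: p1_dvd_iff poly_monom poly_reflect_m1 power_add)
    moreover have "odd (i + (j + degree u))" using assms(3) unfolding dg by presburger
    ultimately have "poly u (-1) = 0"
      by (auto simp: minus_one_power_iff split: if_splits)
    then have "?m dvd u" by (simp add: p1_dvd_iff)
    then have "?m^N * ?m dvd g" unfolding g by (rule mult_dvd_mono[OF dvd_refl])
    then show ?thesis by (simp add: mult.commute)
  qed
qed

lemma pow_dvd_lower: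
  fixes m q g :: "complex poly"
  assumes "m^L dvd g * (m * q)" "coprime m q" "L \<ge> 1" "m \<noteq> 0"
  shows "m^(L-1) dvd g"
proof -
  have "m^L = m^(L-1) * m" using assms(3) by (metis Suc_diff_le diff_Suc_1 power_Suc2)
  moreover have "g * (m * q) = (g * q) * m" by (simp add: ac_simps)
  ultimately have "m^(L-1) * m dvd (g * q) * m" using assms(1) by metis
  then have "m^(L-1) dvd g * q" using assms(4) by simp
  moreover have "coprime (m^(L-1)) q" using assms(2) by simp
  ultimately show ?thesis by (simp add: coprime_dvd_mult_left_iff)
qed

lemma coprime_m1_p1: "coprime [:-1,1::complex:] [:1,1:]"
  using coprime_lin[of "[:1,1::complex:]" 1] by simp
lemma coprime_p1_m1: "coprime [:1,1::complex:] [:-1,1:]"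
  using coprime_lin[of "[:-1,1::complex:]" "-1"] by simp

lemma hard_poly:
  fixes P Ps g :: "complex poly"
  assumes P: "P = [:-1, 1:] ^ L * [:1, 1:] ^ K * Ps"
    and n1: "poly Ps 1 \<noteq> 0" and n2: "poly Ps (-1) \<noteq> 0"
    and d1: "P dvd g * ([:-1, 1:] * [:1, 1:])"
    and d2: "P dvd monom 1 i * g - monom 1 j * reflect_poly g"
    and par: "even (i + j + degree g)"
  shows "[:-1, 1:] ^ (2 * (L div 2)) * [:1, 1:] ^ (2 * (K div 2)) * Ps dvd g"
proof -
  let ?m = "[:-1, 1::complex:]" and ?p = "[:1, 1::complex:]"
  have c1: "coprime Ps ?m" "coprime Ps ?p"
    using coprime_lin[OF n1] coprime_lin[OF n2] by (simp_all add: coprime_commute)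
  have cPs: "coprime Ps (?m * ?p)"
    using c1 by (simp only: coprime_mult_right_iff; blast)
  have "Ps dvd P" using P by simp
  then have "Ps dvd g * (?m * ?p)" using d1 dvd_trans by blast
  then have gPs: "Ps dvd g" using cPs coprime_dvd_mult_left_iff by blast
  have mP: "?m^L dvd P" using P by (metis dvd_mult2 dvd_triv_left)
  have pP: "?p^K dvd P" unfolding P by (intro dvd_mult2 dvd_mult dvd_refl)
  have gm: "?m^(2 * (L div 2)) dvd g"
  proof (cases "L = 0")
    case True then show ?thesis by simp
  next
    case False
    have "?m^L dvd g * (?m * ?p)" using mP d1 dvd_trans by blast
    then have low: "?m^(L-1) dvd g" using False coprime_m1_p1 by (intro pow_dvd_lower) auto
    show ?thesis
    proof (cases "even L")
      case True
      have "?m^((L-1)+1) dvd g"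
        using m1_part[of "L-1" g i j] low True False mP d2 dvd_trans by auto
      then show ?thesis using True False by simp
    next
      case False
      then have "2 * (L div 2) = L - 1" by presburger
      then show ?thesis using low by simp
    qed
  qed
  have gp: "?p^(2 * (K div 2)) dvd g"
  proof (cases "K = 0")
    case True then show ?thesis by simp
  next
    case False
    have "?p^K dvd g * (?p * ?m)" using pP d1 dvd_trans by (metis mult.commute)
    then have low: "?p^(K-1) dvd g" using False coprime_p1_m1 by (intro pow_dvd_lower) auto
    show ?thesis
    proof (cases "even K")
      case True
      have "odd (i + j + degree g + (K - 1))" using True False par by presburger
      then have "?p^((K-1)+1) dvd g"
        using p1_part[of "K-1" g i j] low True False pP d2 dvd_trans by auto
      then show ?thesis using True False by simp
    next
      case False
      then have "2 * (K div 2) = K - 1" by presburger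
      then show ?thesis using low by simp
    qed
  qed
  have "?m^(2 * (L div 2)) * ?p^(2 * (K div 2)) dvd g"
    using gm gp coprime_m1_p1 by (intro divides_mult) auto
  moreover have "coprime (?m^(2 * (L div 2)) * ?p^(2 * (K div 2))) Ps"
    using coprime_lin_pow[OF n1] coprime_lin_pow[OF n2] by simp
  ultimately show ?thesis using gPs by (metis divides_mult)
qed



lemma ldvd_of_dvd: "A dvd G \<Longrightarrow> ldvd (lpoly A) (fls_shift k (lpoly G))"
proof -
  assume "A dvd G"
  then obtain B where "G = A * B" by blast
  then have "fls_shift k (lpoly G) = lpoly A * fls_shift k (lpoly B)"
    by (simp add: lpoly_mult fls_shifted_times_simps)
  then show "ldvd (lpoly A) (fls_shift k (lpoly G))"
    unfolding ldvd_def by auto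
qed

lemma ldvd_rep:
  assumes "ldvd (lpoly A) p"
  obtains k u where "p = fls_shift k (lpoly (A * u))"
proof -
  obtain r where r: "r \<in> laurent_polys" "p = lpoly A * r" using assms unfolding ldvd_def by blast
  then obtain k u where "r = fls_shift k (lpoly u)" using LP_iff by blast
  then have "p = fls_shift k (lpoly (A * u))" using r by (simp add: lpoly_mult fls_shifted_times_simps)
  then show ?thesis using that by blast
qed

lemma ldvd_mult_right: assumes "ldvd A f" "g \<in> laurent_polys" shows "ldvd A (f * g)"
proof -
  obtain r where r: "r \<in> laurent_polys" "f = A * r" using assms(1) unfolding ldvd_def by blast
  then have "f * g = A * (r * g)" by (simp add: mult.assoc)
  then show ?thesis unfolding ldvd_def using LP_mult[OF r(1) assms(2)] by blast
qed
lemma ldvd_diff: assumes "ldvd A f" "ldvd A g" shows "ldvd A (f - g)"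
proof -
  obtain r where r: "r \<in> laurent_polys" "f = A * r" using assms(1) unfolding ldvd_def by blast
  obtain r' where r': "r' \<in> laurent_polys" "g = A * r'" using assms(2) unfolding ldvd_def by blast
  have "f - g = A * (r - r')" by (simp add: r r' right_diff_distrib)
  then show ?thesis unfolding ldvd_def using LP_diff[OF r(1) r'(1)] by blast
qed
lemma ldvd_uminus: assumes "ldvd A (- f)" shows "ldvd A f"
proof -
  obtain r where r: "r \<in> laurent_polys" "- f = A * r" using assms(1) unfolding ldvd_def by blast
  then have "f = A * (- r)" by (metis minus_minus mult_minus_right)
  then show ?thesis unfolding ldvd_def using LP_uminus[OF r(1)] by blast
qed
lemma ldvd_2: "ldvd A (2 * f) \<Longrightarrow> ldvd A f"
proof -
  assume "ldvd A (2 * f)"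
  then obtain r where r: "r \<in> laurent_polys" "2 * f = A * r" unfolding ldvd_def by blast
  have "fls_const (1/2) * (2 :: complex fls) = 1"
    using fls_const_mult_const[of "1/2" "2::complex"] by simp
  then have "fls_const (1/2) * (2 * f) = f" by (metis mult.assoc mult_1)
  then have "f = A * (fls_const (1/2) * r)" using r(2)
    by (metis mult.left_commute)
  then show "ldvd A f" unfolding ldvd_def using r(1) LP_mult LP_const by blast
qed

lemma antisym_rep:
  assumes "s \<in> laurent_polys" "lrefl s = - s"
  obtains k h where "s = fls_shift k (lpoly h)" "[:-1,1:] * [:1,1:] dvd h"
proof -
  obtain k h where s: "s = fls_shift k (lpoly h)" using assms(1) LP_iff by blast
  define M where "M = max (int (degree h) - k) k"
  define i where "i = nat (M - (int (degree h) - k))"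
  define j where "j = nat (M - k)"
  have "lrefl s + s = 0" using assms(2) by simp
  then have "fls_shift M (lpoly (monom 1 i * reflect_poly h + monom 1 j * h)) = 0"
    unfolding s lrefl_rep shift_add M_def i_def j_def by simp
  then have eq: "monom 1 i * reflect_poly h + monom 1 j * h = 0" by (simp add: shift_lpoly_eq0)
  have "int i = M - (int (degree h) - k)" "int j = M - k" unfolding i_def j_def M_def by auto
  then have "int (i + degree h + j) = 2 * M" by simp
  then have par: "even (i + degree h + j)"
    by (metis even_mult_iff even_numeral even_of_nat_iff)
  from eq have "poly (monom 1 i * reflect_poly h + monom 1 j * h) 1 = 0" by simp
  then have "poly h 1 = 0" by (simp add: poly_monom poly_reflect_1)
  then have d1: "[:-1,1:] dvd h" by (simp add: m1_dvd_iff)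
  from eq have "poly (monom 1 i * reflect_poly h + monom 1 j * h) (-1) = 0" by simp
  then have "(-1) ^ (i + degree h) * poly h (-1) + (-1) ^ j * poly h (-1) = 0"
    by (simp add: poly_monom poly_reflect_m1 power_add mult.assoc)
  then have "poly h (-1) = 0" using par
    by (auto simp: minus_one_power_iff split: if_splits)
  then have d2: "[:1,1:] dvd h" by (simp add: p1_dvd_iff)
  have "[:-1,1:] * [:1,1:] dvd h" using d1 d2 coprime_m1_p1 by (rule divides_mult)
  then show ?thesis using that s by blast
qed

lemma ldvd_ps:
  assumes PP: "P dvd Pt * ([:-1,1:] * [:1,1:])"
    and "ldvd (lpoly Pt) p" "s \<in> laurent_polys" "lrefl s = - s"
  shows "ldvd (lpoly P) (p * s)"
proof -
  obtain k u where p: "p = fls_shift k (lpoly (Pt * u))" using assms(2) ldvd_rep by blast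
  obtain l h where s: "s = fls_shift l (lpoly h)" and h: "[:-1,1:] * [:1,1:] dvd h"
    using antisym_rep assms(3,4) by blast
  have "p * s = fls_shift (k + l) (lpoly (Pt * u * h))"
    by (simp add: p s fls_times_both_shifted_simp lpoly_mult)
  moreover have "P dvd Pt * u * h"
  proof -
    have "Pt * ([:-1,1:] * [:1,1:]) dvd Pt * h" using h by (rule mult_dvd_mono[OF dvd_refl])
    then have "P dvd Pt * h" using PP dvd_trans by blast
    then have "P dvd Pt * h * u" by (rule dvd_mult2)
    then show ?thesis by (simp only: ac_simps)
  qed
  ultimately show ?thesis using ldvd_of_dvd by simp
qed

lemma neg_one_pow_same: "even (a + b) \<Longrightarrow> (-1::complex) ^ a = (-1) ^ b"
  by (auto simp: minus_one_power_iff)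

lemma ldvd_bracket:
  assumes PP: "P dvd Pt * ([:-1,1:] * [:1,1:])" and rPt: "reflect_poly Pt = Pt"
    and ePt: "even (degree Pt)" and "ldvd (lpoly Pt) p" "r \<in> laurent_polys" and Pt0: "Pt \<noteq> 0"
  shows "ldvd (lpoly P) (p * lrefl r - lrefl p * r)"
proof -
  obtain k u where p: "p = fls_shift k (lpoly (Pt * u))" using assms(4) ldvd_rep by blast
  obtain l h where r: "r = fls_shift l (lpoly h)" using assms(5) LP_iff by blast
  define dg where "dg = degree (Pt * u)"
  define a where "a = k + (int (degree h) - l)"
  define b where "b = int dg - k + l"
  define M where "M = max a b"
  define i where "i = nat (M - a)"
  define j where "j = nat (M - b)"
  define H where "H = monom 1 i * (u * reflect_poly h) - monom 1 j * (reflect_poly u * h)"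
  have "p * lrefl r = fls_shift a (lpoly (Pt * u * reflect_poly h))"
    unfolding p r lrefl_rep
    by (simp add: fls_times_both_shifted_simp lpoly_mult a_def)
  moreover have "lrefl p * r = fls_shift b (lpoly (Pt * reflect_poly u * h))"
    unfolding p r lrefl_rep
    by (simp add: fls_times_both_shifted_simp lpoly_mult b_def dg_def reflect_poly_mult rPt)
  ultimately have "p * lrefl r - lrefl p * r = fls_shift M (lpoly (monom 1 i * (Pt * u * reflect_poly h) - monom 1 j * (Pt * reflect_poly u * h)))"
    by (simp only: shift_diff M_def i_def j_def)
  also have "monom 1 i * (Pt * u * reflect_poly h) - monom 1 j * (Pt * reflect_poly u * h) = Pt * H"
    unfolding H_def by (simp add: algebra_simps)
  finally have eq: "p * lrefl r - lrefl p * r = fls_shift M (lpoly (Pt * H))" .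
  have "poly H 1 = 0" unfolding H_def by (simp add: poly_monom poly_reflect_1)
  then have d1: "[:-1,1:] dvd H" by (simp add: m1_dvd_iff)
  have "poly H (-1) = 0"
  proof (cases "u = 0 \<or> h = 0")
    case True then show ?thesis by (auto simp: H_def)
  next
    case False
    then have "dg = degree Pt + degree u"
      using Pt0 unfolding dg_def by (subst degree_mult_eq) auto
    moreover have "int i = M - a" "int j = M - b" unfolding i_def j_def M_def by auto
    ultimately have "int (i + degree h + (j + degree u)) = 2 * M - int (degree Pt)"
      unfolding a_def b_def by simp
    moreover have "even (2 * M - int (degree Pt))" using ePt by simp
    ultimately have "even (int (i + degree h + (j + degree u)))" by simp
    then have "even (i + degree h + (j + degree u))" by (simp only: even_of_nat_iff)
    then have "(-1::complex) ^ (i + degree h) = (-1) ^ (j + degree u)" by (rule neg_one_pow_same)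
    then show ?thesis unfolding H_def
      by (simp add: poly_monom poly_reflect_m1 power_add algebra_simps)
  qed
  then have d2: "[:1,1:] dvd H" by (simp add: p1_dvd_iff)
  have "[:-1,1:] * [:1,1:] dvd H" using d1 d2 coprime_m1_p1 by (rule divides_mult)
  then have "Pt * ([:-1,1:] * [:1,1:]) dvd Pt * H" by (rule mult_dvd_mono[OF dvd_refl])
  then have "P dvd Pt * H" using PP dvd_trans by blast
  then show ?thesis unfolding eq by (rule ldvd_of_dvd)
qed

lemma OA_mem: "(a, b, c) \<in> OA \<longleftrightarrow> a \<in> laurent_polys \<and> c \<in> laurent_polys \<and> b = lrefl a \<and> lrefl c = - c"
  by (auto simp: OA_def)

lemma S_mem: "x \<in> {(p, lrefl p, q) | p q. (p, lrefl p, q) \<in> OA \<and> ldvd A p \<and> ldvd B q} \<longleftrightarrow>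
   x \<in> OA \<and> ldvd A (fst x) \<and> ldvd B (snd (snd x))"
  by (cases x) (auto simp: OA_mem)

lemma lbr_in_OA:
  assumes "p \<in> laurent_polys" "q \<in> laurent_polys" "r \<in> laurent_polys" "s \<in> laurent_polys"
    "lrefl q = - q" "lrefl s = - s"
  shows "lbr (p, lrefl p, q) (r, lrefl r, s) \<in> OA"
proof -
  have "lrefl (2 * (q * r - p * s)) = 2 * (lrefl p * s - q * lrefl r)"
    using assms by (simp add: lrefl_mult lrefl_diff LP_mult LP_diff algebra_simps)
  moreover have "lrefl (p * lrefl r - lrefl p * r) = - (p * lrefl r - lrefl p * r)"
    using assms by (simp add: lrefl_mult lrefl_diff LP_mult LP_diff LP_lrefl lrefl_lrefl)
  ultimately show ?thesis using assms
    by (simp add: OA_mem LP_mult LP_diff LP_lrefl)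
qed

lemma m1p1_reflect: "reflect_poly ([:-1,1::complex:] * [:1,1:]) = - ([:-1,1:] * [:1,1:])"
  by (simp only: reflect_poly_mult reflect_m1 reflect_p1) simp

theorem lemma2:
  fixes P Pstar :: "complex poly" and L K :: nat
  assumes "reciprocal P"
    and "P = [:-1, 1:] ^ L * [:1, 1:] ^ K * Pstar"
    and "poly Pstar 1 \<noteq> 0" and "poly Pstar (-1) \<noteq> 0"
  shows "ZI (IP P) =
           {(p, lrefl p, q) | p q. (p, lrefl p, q) \<in> OA \<and>
              ldvd (lpoly ([:-1, 1:] ^ (2 * (L div 2)) * [:1, 1:] ^ (2 * (K div 2)) * Pstar)) p \<and>
              ldvd (lpoly P) q}
         \<and> (closed_ideal (IP P) \<longleftrightarrow> even L \<and> even K)"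
proof -
  let ?m = "[:-1, 1::complex:]" and ?p = "[:1, 1::complex:]"
  define Pt where "Pt = ?m ^ (2 * (L div 2)) * ?p ^ (2 * (K div 2)) * Pstar"
  define c where "c = ?m ^ (L mod 2) * ?p ^ (K mod 2)"
  note rf = recip_facts[OF assms]
  have Pne: "P \<noteq> 0" using rf(3) by auto
  have PPt: "P = Pt * c"
  proof -
    have "?m ^ L = ?m ^ (2 * (L div 2)) * ?m ^ (L mod 2)"
      by (simp flip: power_add)
    moreover have "?p ^ K = ?p ^ (2 * (K div 2)) * ?p ^ (K mod 2)"
      by (simp flip: power_add)
    ultimately show ?thesis unfolding assms(2) Pt_def c_def by (simp only: ac_simps)
  qed
  have Pt0: "Pt \<noteq> 0" using rf(4) by (simp add: Pt_def)
  have cdeg: "degree c = L mod 2 + K mod 2"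
    unfolding c_def by (subst degree_mult_eq) (auto simp: degree_linear_power)
  have PP: "P dvd Pt * (?m * ?p)"
  proof -
    have "?m ^ (L mod 2) dvd ?m ^ 1" by (rule le_imp_power_dvd) simp
    then have "?m ^ (L mod 2) dvd ?m" by (simp only: power_one_right)
    moreover have "?p ^ (K mod 2) dvd ?p ^ 1" by (rule le_imp_power_dvd) simp
    then have "?p ^ (K mod 2) dvd ?p" by (simp only: power_one_right)
    ultimately have "c dvd ?m * ?p" unfolding c_def by (rule mult_dvd_mono)
    then show ?thesis unfolding PPt by (rule mult_dvd_mono[OF dvd_refl])
  qed
  have rPt: "reflect_poly Pt = Pt"
  proof -
    have "reflect_poly (?m ^ (2 * (L div 2))) = ?m ^ (2 * (L div 2))"
      using smult_power[of "-1" ?m "2 * (L div 2)"]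
      by (simp only: reflect_poly_power reflect_m1) simp
    then show ?thesis unfolding Pt_def
      by (simp only: reflect_poly_mult reflect_poly_power reflect_p1 rf(1))
  qed
  have ePt: "even (degree Pt)"
  proof -
    have "degree Pt = 2 * (L div 2) + 2 * (K div 2) + degree Pstar"
      unfolding Pt_def using rf(4) by (simp add: degree_mult_eq degree_linear_power)
    then show ?thesis using rf(2) by simp
  qed
  define RHS where "RHS = {(p, lrefl p, q) | p q. (p, lrefl p, q) \<in> OA \<and>
              ldvd (lpoly Pt) p \<and> ldvd (lpoly P) q}"
  have IP_eq: "IP P = {(p, lrefl p, q) | p q. (p, lrefl p, q) \<in> OA \<and>
              ldvd (lpoly P) p \<and> ldvd (lpoly P) q}" by (simp add: IP_def)
  have Z: "ZI (IP P) = RHS"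
  proof (intro set_eqI iffI)
    fix x assume x: "x \<in> ZI (IP P)"
    then have xOA: "x \<in> OA" and xb: "\<And>y. y \<in> OA \<Longrightarrow> lbr x y \<in> IP P" by (auto simp: ZI_def)
    then obtain p q where xpq: "x = (p, lrefl p, q)" and pq: "p \<in> laurent_polys" "q \<in> laurent_polys" "lrefl q = - q"
      by (cases x) (auto simp: OA_mem)
    have "(1, lrefl 1, 0) \<in> OA" by (simp add: OA_mem)
    then have "lbr x (1, lrefl 1, 0) \<in> IP P" by (rule xb)
    then have "ldvd (lpoly P) (2 * q) \<and> ldvd (lpoly P) (p - lrefl p)"
      unfolding IP_eq S_mem by (simp add: xpq)
    then have dq: "ldvd (lpoly P) q" and dpp: "ldvd (lpoly P) (p - lrefl p)" using ldvd_2 by auto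
    define s0 where "s0 = fls_shift 1 (lpoly (?m * ?p))"
    have s0r: "lrefl s0 = - s0"
    proof -
      have "degree (?m * ?p) = 2" by (simp add: degree_mult_eq)
      then show ?thesis unfolding s0_def lrefl_rep m1p1_reflect lpoly_uminus
        by (simp del: mult_pCons_left mult_pCons_right)
    qed
    have "(0, lrefl 0, s0) \<in> OA" using s0r by (simp add: OA_mem s0_def)
    then have "lbr x (0, lrefl 0, s0) \<in> IP P" by (rule xb)
    then have "ldvd (lpoly P) (2 * (- (p * s0)))"
      unfolding IP_eq S_mem by (simp add: xpq)
    then have dps: "ldvd (lpoly P) (p * s0)" using ldvd_2 ldvd_uminus by blast
    obtain k g where pg: "p = fls_shift k (lpoly g)" using pq(1) LP_iff by blast
    have "p * s0 = fls_shift (k + 1) (lpoly (g * (?m * ?p)))"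
      by (simp only: pg s0_def fls_times_both_shifted_simp lpoly_mult)
    then have d1: "P dvd g * (?m * ?p)" using dps ldvd_iff[OF rf(3)] by simp
    define M where "M = max k (int (degree g) - k)"
    define i where "i = nat (M - k)"
    define j where "j = nat (M - (int (degree g) - k))"
    have "p - lrefl p = fls_shift M (lpoly (monom 1 i * g - monom 1 j * reflect_poly g))"
      unfolding pg lrefl_rep by (simp only: shift_diff M_def i_def j_def)
    then have d2: "P dvd monom 1 i * g - monom 1 j * reflect_poly g" using dpp ldvd_iff[OF rf(3)] by simp
    have "int i = M - k" "int j = M - (int (degree g) - k)" unfolding i_def j_def M_def by auto
    then have "int (i + j + degree g) = 2 * M" by simp
    then have "even (int (i + j + degree g))" by simp
    then have par: "even (i + j + degree g)" by (simp only: even_of_nat_iff)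
    have "Pt dvd g" unfolding Pt_def by (rule hard_poly[OF assms(2-4) d1 d2 par])
    then have "ldvd (lpoly Pt) p" unfolding pg by (rule ldvd_of_dvd)
    then show "x \<in> RHS" unfolding RHS_def S_mem using xOA dq by (simp add: xpq)
  next
    fix x assume "x \<in> RHS"
    then have xOA: "x \<in> OA" and dp: "ldvd (lpoly Pt) (fst x)" and dq: "ldvd (lpoly P) (snd (snd x))"
      unfolding RHS_def S_mem by auto
    then obtain p q where xpq: "x = (p, lrefl p, q)" and pq: "p \<in> laurent_polys" "q \<in> laurent_polys" "lrefl q = - q"
      by (cases x) (auto simp: OA_mem)
    have "lbr x y \<in> IP P" if y: "y \<in> OA" for y
    proof -
      obtain r s where yrs: "y = (r, lrefl r, s)" and rs: "r \<in> laurent_polys" "s \<in> laurent_polys" "lrefl s = - s"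
        using y by (cases y) (auto simp: OA_mem)
      have inOA: "lbr x y \<in> OA" unfolding xpq yrs using pq rs by (intro lbr_in_OA) auto
      have "ldvd (lpoly P) (q * r)" using dq rs(1) by (simp add: xpq ldvd_mult_right)
      moreover have "ldvd (lpoly P) (p * s)" using PP dp rs by (intro ldvd_ps) (auto simp: xpq)
      ultimately have "ldvd (lpoly P) (q * r - p * s)" by (rule ldvd_diff)
      then have "ldvd (lpoly P) ((q * r - p * s) * 2)" by (rule ldvd_mult_right) simp
      then have A: "ldvd (lpoly P) (2 * (q * r - p * s))" by (simp add: mult.commute)
      have B: "ldvd (lpoly P) (p * lrefl r - lrefl p * r)"
        using PP rPt ePt dp rs(1) Pt0 by (intro ldvd_bracket) (auto simp: xpq)
      show ?thesis unfolding IP_eq S_mem using inOA A B by (simp add: xpq yrs)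
    qed
    then show "x \<in> ZI (IP P)" using xOA by (simp add: ZI_def)
  qed
  have nz: "IP P \<noteq> {(0, 0, 0)}"
  proof -
    have "ldvd (lpoly P) (lpoly P)" using ldvd_of_dvd[of P P 0] by simp
    moreover have "ldvd (lpoly P) 0" using ldvd_of_dvd[of P 0 0] by simp
    ultimately have "(lpoly P, lrefl (lpoly P), 0) \<in> IP P"
      unfolding IP_eq S_mem by (simp add: OA_mem)
    moreover have "lpoly P \<noteq> 0" using Pne by (metis lpoly_0 lpoly_eq_iff)
    ultimately show ?thesis by auto
  qed
  have pr: "IP P \<noteq> OA"
  proof
    assume h: "IP P = OA"
    have "(1, lrefl 1, 0) \<in> OA" by (simp add: OA_mem)
    then have "(1, lrefl 1, 0) \<in> IP P" using h by simp
    then have "ldvd (lpoly P) 1" unfolding IP_eq S_mem by simp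
    then have "ldvd (lpoly P) (fls_shift 0 (lpoly 1))" by simp
    then have "P dvd 1" using ldvd_iff[OF rf(3)] by blast
    then have "degree P \<le> degree (1 :: complex poly)" by (rule dvd_imp_degree_le) simp
    then show False using assms(1) by (simp add: reciprocal_def)
  qed
  have cl: "ZI (IP P) = IP P \<longleftrightarrow> even L \<and> even K"
  proof
    assume eq: "ZI (IP P) = IP P"
    show "even L \<and> even K"
    proof (rule ccontr)
      assume odd: "\<not> (even L \<and> even K)"
      have "ldvd (lpoly Pt) (lpoly Pt)" using ldvd_of_dvd[of Pt Pt 0] by simp
      moreover have "ldvd (lpoly P) 0" using ldvd_of_dvd[of P 0 0] by simp
      ultimately have "(lpoly Pt, lrefl (lpoly Pt), 0) \<in> RHS"
        unfolding RHS_def S_mem by (simp add: OA_mem)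
      then have "(lpoly Pt, lrefl (lpoly Pt), 0) \<in> IP P" using eq Z by simp
      then have "ldvd (lpoly P) (fls_shift 0 (lpoly Pt))" unfolding IP_eq S_mem by simp
      then have "P dvd Pt" using ldvd_iff[OF rf(3)] by blast
      then have "degree P \<le> degree Pt" using Pt0 by (rule dvd_imp_degree_le)
      moreover have "degree P = degree Pt + degree c"
        unfolding PPt using Pt0 PPt Pne by (subst degree_mult_eq) auto
      ultimately have "degree c = 0" by simp
      then show False using cdeg odd by presburger
    qed
  next
    assume "even L \<and> even K"
    then have "Pt = P" unfolding Pt_def assms(2) by simp
    then show "ZI (IP P) = IP P" using Z unfolding RHS_def IP_eq by simp
  qed
  show ?thesis using Z cl nz pr unfolding RHS_def Pt_def closed_ideal_def by blast
qed

end
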